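(* Let $\{\tilde\alpha,\tilde\beta\}$ be a dual timelike - spacelike Mannheim pair in $ID_1^3$, with $\tilde\beta(s^* )=\tilde\alpha(s)+\lambda B(s)$ where $\lambda$ is a nonzero dual constant. If $\tau$ is the dual torsion of $\tilde\alpha$ and $P$, $Q$ are the dual curvature and dual torsion of $\tilde\beta$, then $$\tau=-\frac{P}{\lambda Q}.$$
   Context: Dual numbers: $ID=\{a+\varepsilon a^*: a,a^*\in\mathbb R\}$ with $\varepsilon^2=0$; differentiable functions extend by $f(a+\varepsilon a^* )=f(a)+\varepsilon a^* f'(a)$. $ID_1^3$ is $ID^3$ with dual Lorentzian inner product $\langle \vec A,\vec B\rangle=\langle\vec a,\vec b\rangle+\varepsilon(\langle\vec a,\vec b^*\rangle+\langle\vec a^*,\vec b\rangle)$, $\langle\vec a,\vec b\rangle=-a_1b_1+a_2b_2+a_3b_3$; dual spacelike/timelike vectors have $\langle A,A\rangle>0$ / $<0$. $\tilde\alpha$ is a dual timelike curve with dual arc length $s$ and Frenet frame $\{T,N,B\}$ ($T$ timelike, $N,B$ spacelike unit, mutually orthogonal): $T'=\kappa N$, $N'=\kappa T+\tau B$, $B'=-\tau N$. $\tilde\beta$ is a dual spacelike curve with dual timelike binormal, arc length $s^*$, frame $\{V_1,V_2,V_3\}$ ($V_1,V_2$ spacelike unit, $V_3$ timelike unit): $V_1'=PV_2$, $V_2'=-PV_1+QV_3$, $V_3'=QV_2$. A dual timelike - spacelike Mannheim pair means that under a correspondence $s\mapsto s^*$ the dual binormal line of $\tilde\alpha$ coincides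 with the dual principal normal line of $\tilde\beta$ at corresponding points. *)

theory Defs
  imports "HOL-Analysis.Analysis"
begin

datatype dual = Dual (dre: real) (ddu: real)

instantiation dual :: comm_ring_1
begin
definition "0 = Dual 0 0"
definition "1 = Dual 1 0"
definition "x + y = Dual (dre x + dre y) (ddu x + ddu y)"
definition "x - y = Dual (dre x - dre y) (ddu x - ddu y)"
definition "- x = Dual (- dre x) (- ddu x)"
definition "x * y = Dual (dre x * dre y) (dre x * ddu y + ddu x * dre y)"
instance
  by standard (auto simp: zero_dual_def one_dual_def plus_dual_def minus_dual_def
      uminus_dual_def times_dual_def algebra_simps intro: dual.expand)
end

text \<open>Division of dual numbers (meaningful when the real part of the divisor is nonzero):
  1/(a + eps a*) = 1/a - eps a*/a^2.\<close>
instantiation dual :: inverse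
begin
definition "inverse x = Dual (1 / dre x) (- ddu x / (dre x)\<^sup>2)"
definition "divide x y = x * inverse (y::dual)"
instance ..
end

text \<open>Extension of a differentiable real function: f(a + eps a*) = f(a) + eps a* f'(a).
  Dual square root.\<close>
definition dsqrt :: "dual \<Rightarrow> dual" where
  "dsqrt x = Dual (sqrt (dre x)) (ddu x * (1 / (2 * sqrt (dre x))))"

type_synonym dvec = "dual ^ 3"

definition vre :: "dvec \<Rightarrow> real ^ 3" where "vre A = (\<chi> i. dre (A $ i))"
definition vdu :: "dvec \<Rightarrow> real ^ 3" where "vdu A = (\<chi> i. ddu (A $ i))"

definition lor :: "real ^ 3 \<Rightarrow> real ^ 3 \<Rightarrow> real" where
  "lor a b = - a$1 * b$1 + a$2 * b$2 + a$3 * b$3"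

definition dinner :: "dvec \<Rightarrow> dvec \<Rightarrow> dual" where
  "dinner A B = Dual (lor (vre A) (vre B)) (lor (vre A) (vdu B) + lor (vdu A) (vre B))"

definition dspacelike :: "dvec \<Rightarrow> bool" where "dspacelike A \<longleftrightarrow> dre (dinner A A) > 0"
definition dtimelike :: "dvec \<Rightarrow> bool" where "dtimelike A \<longleftrightarrow> dre (dinner A A) < 0"

definition dnorm_s :: "dvec \<Rightarrow> dual" where "dnorm_s A = dsqrt (dinner A A)"
definition dnorm_t :: "dvec \<Rightarrow> dual" where "dnorm_t A = dsqrt (- dinner A A)"

definition ddet :: "dvec \<Rightarrow> dvec \<Rightarrow> dvec \<Rightarrow> dual" where
  "ddet A B C = A$1 * (B$2 * C$3 - B$3 * C$2) - A$2 * (B$1 * C$3 - B$3 * C$1)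
               + A$3 * (B$1 * C$2 - B$2 * C$1)"

definition dual_deriv :: "(real \<Rightarrow> dual) \<Rightarrow> dual \<Rightarrow> real \<Rightarrow> bool" where
  "dual_deriv f f' t \<longleftrightarrow> ((\<lambda>u. dre (f u)) has_real_derivative dre f') (at t) \<and>
                         ((\<lambda>u. ddu (f u)) has_real_derivative ddu f') (at t)"

definition dvec_deriv :: "(real \<Rightarrow> dvec) \<Rightarrow> dvec \<Rightarrow> real \<Rightarrow> bool" where
  "dvec_deriv X X' t \<longleftrightarrow> ((\<lambda>u. vre (X u)) has_vector_derivative vre X') (at t) \<and>
                         ((\<lambda>u. vdu (X u)) has_vector_derivative vdu X') (at t)"

text \<open>Derivatives with respect to
  the dual arc length are d/ds = (1/(ds/dt)) d/dt; the Frenet equations are written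
  multiplied by ds/dt.\<close>
definition dual_timelike_frenet ::
  "real set \<Rightarrow> (real \<Rightarrow> dvec) \<Rightarrow> (real \<Rightarrow> dual) \<Rightarrow> (real \<Rightarrow> dvec) \<Rightarrow> (real \<Rightarrow> dvec)
   \<Rightarrow> (real \<Rightarrow> dvec) \<Rightarrow> (real \<Rightarrow> dual) \<Rightarrow> (real \<Rightarrow> dual) \<Rightarrow> bool" where
  "dual_timelike_frenet I \<alpha> s T N B \<kappa> \<tau> \<longleftrightarrow>
     (\<forall>t\<in>I. \<exists>\<alpha>' s'.
        dvec_deriv \<alpha> \<alpha>' t \<and> dtimelike \<alpha>' \<and> dual_deriv s s' t \<and> s' = dnorm_t \<alpha>' \<and>
        T t = inverse s' *s \<alpha>' \<and>
        dinner (T t) (T t) = -1 \<and> dinner (N t) (N t) = 1 \<and> dinner (B t) (B t) = 1 \<and>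
        dinner (T t) (N t) = 0 \<and> dinner (T t) (B t) = 0 \<and> dinner (N t) (B t) = 0 \<and>
        dvec_deriv T ((s' * \<kappa> t) *s N t) t \<and>
        dvec_deriv N ((s' * \<kappa> t) *s T t + (s' * \<tau> t) *s B t) t \<and>
        dvec_deriv B (- ((s' * \<tau> t) *s N t)) t)"

definition dual_spacelike_frenet ::
  "real set \<Rightarrow> (real \<Rightarrow> dvec) \<Rightarrow> (real \<Rightarrow> dual) \<Rightarrow> (real \<Rightarrow> dvec) \<Rightarrow> (real \<Rightarrow> dvec)
   \<Rightarrow> (real \<Rightarrow> dvec) \<Rightarrow> (real \<Rightarrow> dual) \<Rightarrow> (real \<Rightarrow> dual) \<Rightarrow> bool" where
  "dual_spacelike_frenet I \<beta> s V1 V2 V3 P Q \<longleftrightarrow>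
     (\<forall>t\<in>I. \<exists>\<beta>' s'.
        dvec_deriv \<beta> \<beta>' t \<and> dspacelike \<beta>' \<and> dual_deriv s s' t \<and> s' = dnorm_s \<beta>' \<and>
        V1 t = inverse s' *s \<beta>' \<and>
        dinner (V1 t) (V1 t) = 1 \<and> dinner (V2 t) (V2 t) = 1 \<and> dinner (V3 t) (V3 t) = -1 \<and>
        dinner (V1 t) (V2 t) = 0 \<and> dinner (V1 t) (V3 t) = 0 \<and> dinner (V2 t) (V3 t) = 0 \<and>
        dvec_deriv V1 ((s' * P t) *s V2 t) t \<and>
        dvec_deriv V2 (- ((s' * P t) *s V1 t) + (s' * Q t) *s V3 t) t \<and>
        dvec_deriv V3 ((s' * Q t) *s V2 t) t)"

end

theory Submission imports Defs begin

lemma dual_ops [simp]: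
  "dre (x + y) = dre x + dre y" "ddu (x + y) = ddu x + ddu y"
  "dre (x - y) = dre x - dre y" "ddu (x - y) = ddu x - ddu y"
  "dre (- x) = - dre x" "ddu (- x) = - ddu x"
  "dre (x * y) = dre x * dre y" "ddu (x * y) = dre x * ddu y + ddu x * dre y"
  "dre 0 = 0" "ddu 0 = 0" "dre 1 = 1" "ddu 1 = 0"
  by (simp_all add: plus_dual_def minus_dual_def uminus_dual_def times_dual_def
      zero_dual_def one_dual_def)

lemma dual_eqI: "dre x = dre y \<Longrightarrow> ddu x = ddu y \<Longrightarrow> x = y"
  by (cases x; cases y) auto

lemma dual_inv: "dre x \<noteq> 0 \<Longrightarrow> x * inverse x = 1"
  by (rule dual_eqI) (simp_all add: inverse_dual_def field_simps power2_eq_square)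

lemma dinner_alt: "dinner A B = - (A$1 * B$1) + A$2 * B$2 + A$3 * B$3"
  by (rule dual_eqI) (simp_all add: dinner_def lor_def vre_def vdu_def algebra_simps)

lemma dvec_eqI: "vre A = vre B \<Longrightarrow> vdu A = vdu B \<Longrightarrow> A = (B::dvec)"
  unfolding vre_def vdu_def vec_eq_iff by (auto intro: dual_eqI)

lemma vre_lin: "vre (X + c *s Y) = vre X + dre c *\<^sub>R vre Y"
  by (simp add: vre_def vec_eq_iff)
lemma vdu_lin: "vdu (X + c *s Y) = vdu X + dre c *\<^sub>R vdu Y + ddu c *\<^sub>R vre Y"
  by (simp add: vre_def vdu_def vec_eq_iff)

lemma dvec_deriv_unique: "dvec_deriv X A t \<Longrightarrow> dvec_deriv X B t \<Longrightarrow> A = B"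
  unfolding dvec_deriv_def by (metis dvec_eqI vector_derivative_unique_at)

lemma dvec_deriv_cong: "dvec_deriv X A t \<Longrightarrow> open I \<Longrightarrow> t \<in> I \<Longrightarrow> (\<And>u. u \<in> I \<Longrightarrow> X u = Y u)
  \<Longrightarrow> dvec_deriv Y A t"
  unfolding dvec_deriv_def
  by (metis (no_types, lifting) has_vector_derivative_transform_within_open)

lemma dvec_deriv_lin: "dvec_deriv X A t \<Longrightarrow> dvec_deriv Y C t \<Longrightarrow>
  dvec_deriv (\<lambda>u. X u + c *s Y u) (A + c *s C) t"
  unfolding dvec_deriv_def vre_lin vdu_lin
  by (auto intro!: derivative_eq_intros)

lemma gram_poly:
  fixes a1 a2 a3 b1 b2 b3 c1 c2 c3 d1 d2 d3 e1 e2 e3 f1 f2 f3 :: "'a::comm_ring_1"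
  shows "(a1 * (b2 * c3 - b3 * c2) - a2 * (b1 * c3 - b3 * c1) + a3 * (b1 * c2 - b2 * c1)) *
   (d1 * (e2 * f3 - e3 * f2) - d2 * (e1 * f3 - e3 * f1) + d3 * (e1 * f2 - e2 * f1)) =
   - ((- (a1*d1) + a2*d2 + a3*d3) * ((- (b1*e1) + b2*e2 + b3*e3) * (- (c1*f1) + c2*f2 + c3*f3) - (- (b1*f1) + b2*f2 + b3*f3) * (- (c1*e1) + c2*e2 + c3*e3))
    - (- (a1*e1) + a2*e2 + a3*e3) * ((- (b1*d1) + b2*d2 + b3*d3) * (- (c1*f1) + c2*f2 + c3*f3) - (- (b1*f1) + b2*f2 + b3*f3) * (- (c1*d1) + c2*d2 + c3*d3))
    + (- (a1*f1) + a2*f2 + a3*f3) * ((- (b1*d1) + b2*d2 + b3*d3) * (- (c1*e1) + c2*e2 + c3*e3) - (- (b1*e1) + b2*e2 + b3*e3) * (- (c1*d1) + c2*d2 + c3*d3)))"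
  by (simp add: algebra_simps)

lemma ddet_gram:
  "ddet X1 X2 X3 * ddet Y1 Y2 Y3 =
   - (dinner X1 Y1 * (dinner X2 Y2 * dinner X3 Y3 - dinner X2 Y3 * dinner X3 Y2)
    - dinner X1 Y2 * (dinner X2 Y1 * dinner X3 Y3 - dinner X2 Y3 * dinner X3 Y1)
    + dinner X1 Y3 * (dinner X2 Y1 * dinner X3 Y2 - dinner X2 Y2 * dinner X3 Y1))"
  unfolding ddet_def dinner_alt by (rule gram_poly)

lemma dinner_sym: "dinner A B = dinner B A"
  unfolding dinner_alt by (simp add: algebra_simps)
lemma dinner_add_l: "dinner (A + B) C = dinner A C + dinner B C"
  unfolding dinner_alt by (simp add: algebra_simps)
lemma dinner_scale_l: "dinner (c *s A) B = c * dinner A B"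
  unfolding dinner_alt by (simp add: algebra_simps)
lemma dinner_diff_l: "dinner (A - B) C = dinner A C - dinner B C"
  unfolding dinner_alt by (simp add: algebra_simps)
lemma dinner_neg_l: "dinner (- A) B = - dinner A B"
  unfolding dinner_alt by (simp add: algebra_simps)


lemma dsqrt_pos: "dre x > 0 \<Longrightarrow> dre (dsqrt x) > 0"
  by (simp add: dsqrt_def)

theorem theorem3p3:
  fixes I :: "real set"
    and \<alpha> \<beta> T N B V1 V2 V3 :: "real \<Rightarrow> dvec"
    and s s\<^sub>2 \<kappa> \<tau> P Q :: "real \<Rightarrow> dual"
    and lam :: dual
  assumes "open I"
    and alpha: "dual_timelike_frenet I \<alpha> s T N B \<kappa> \<tau>"
    and beta: "dual_spacelike_frenet I \<beta> s\<^sub>2 V1 V2 V3 P Q"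
    and lambda: "lam \<noteq> 0"
    and mannheim: "\<forall>t\<in>I. \<beta> t = \<alpha> t + lam *s B t"
    and lines: "\<forall>t\<in>I. V2 t = B t"
    and orient: "\<forall>t\<in>I. ddet (V1 t) (V2 t) (V3 t) = ddet (T t) (N t) (B t)"
  shows "\<forall>t\<in>I. \<tau> t = - (P t / (lam * Q t))"
proof
  fix t assume t: "t \<in> I"
  obtain \<alpha>' s' where A:
        "dvec_deriv \<alpha> \<alpha>' t" "dtimelike \<alpha>'" "s' = dnorm_t \<alpha>'" 
        "T t = inverse s' *s \<alpha>'"
        "dinner (T t) (T t) = -1" "dinner (N t) (N t) = 1" "dinner (B t) (B t) = 1"
        "dinner (T t) (N t) = 0" "dinner (T t) (B t) = 0" "dinner (N t) (B t) = 0"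
        "dvec_deriv B (- ((s' * \<tau> t) *s N t)) t"
    using alpha t unfolding dual_timelike_frenet_def by blast
  obtain \<beta>' s2' where Bt:
        "dvec_deriv \<beta> \<beta>' t" "dspacelike \<beta>'" "s2' = dnorm_s \<beta>'"
        "V1 t = inverse s2' *s \<beta>'"
        "dinner (V1 t) (V1 t) = 1" "dinner (V2 t) (V2 t) = 1" "dinner (V3 t) (V3 t) = -1"
        "dinner (V1 t) (V2 t) = 0" "dinner (V1 t) (V3 t) = 0" "dinner (V2 t) (V3 t) = 0"
        "dvec_deriv V2 (- ((s2' * P t) *s V1 t) + (s2' * Q t) *s V3 t) t"
    using beta t unfolding dual_spacelike_frenet_def by blast
  have s1pos: "dre s' > 0" using A(2,3) unfolding dtimelike_def dnorm_t_def
    by (auto intro!: dsqrt_pos)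
  have s2pos: "dre s2' > 0" using Bt(2,3) unfolding dspacelike_def dnorm_s_def
    by (auto intro!: dsqrt_pos)
  have inv1: "s' * inverse s' = 1" using s1pos dual_inv by force
  have inv2: "s2' * inverse s2' = 1" using s2pos dual_inv by force
  have a1: "\<alpha>' = s' *s T t"
    using A(4) inv1 by (simp add: vec_eq_iff mult.assoc[symmetric])
  have "dvec_deriv (\<lambda>u. \<alpha> u + lam *s B u) (\<alpha>' + lam *s (- ((s' * \<tau> t) *s N t))) t"
    by (rule dvec_deriv_lin[OF A(1) A(11)])
  then have "dvec_deriv \<beta> (\<alpha>' + lam *s (- ((s' * \<tau> t) *s N t))) t"
    by (rule dvec_deriv_cong[OF _ \<open>open I\<close> t]) (use mannheim in auto)
  then have b1: "\<beta>' = \<alpha>' + lam *s (- ((s' * \<tau> t) *s N t))"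
    using Bt(1) dvec_deriv_unique by blast
  define a where "a = s' * inverse s2'"
  define c where "c = lam * \<tau> t"
  have hV1: "V1 t = a *s T t + (- (a * c)) *s N t"
    unfolding Bt(4) b1 a1 a_def c_def by (simp add: vec_eq_iff algebra_simps)
  have "dvec_deriv B (- ((s2' * P t) *s V1 t) + (s2' * Q t) *s V3 t) t"
    by (rule dvec_deriv_cong[OF Bt(11) \<open>open I\<close> t]) (use lines in auto)
  then have deq: "- ((s' * \<tau> t) *s N t) = - ((s2' * P t) *s V1 t) + (s2' * Q t) *s V3 t"
    using A(11) dvec_deriv_unique by blast
  have V2B: "V2 t = B t" using lines t by auto
  define x where "x = dinner (V3 t) (T t)"
  define y where "y = dinner (V3 t) (N t)"
  have V3B: "dinner (V3 t) (B t) = 0" using Bt(10) V2B dinner_sym by metis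
  have TN: "dinner (N t) (T t) = 0" "dinner (B t) (T t) = 0" "dinner (B t) (N t) = 0"
    using A(8,9,10) dinner_sym by metis+
  have L1: "dinner (V1 t) X = a * dinner (T t) X - a * c * dinner (N t) X" for X
    unfolding hV1 dinner_add_l dinner_scale_l by (simp add: algebra_simps)
  have V1T: "dinner (V1 t) (T t) = - a" using L1[of "T t"] A(5) TN(1) by simp
  have V1N: "dinner (V1 t) (N t) = - (a * c)" using L1[of "N t"] A(6,8) by simp
  have V1B: "dinner (V1 t) (B t) = 0" using L1[of "B t"] A(9,10) by simp
  have V1V3: "dinner (V1 t) (V3 t) = a * x - a * c * y"
    using L1[of "V3 t"] unfolding x_def y_def by (simp add: dinner_sym)
  have "dinner (V1 t) (V1 t) = a * (- a) - a * c * (- (a * c))"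
    using L1[of "V1 t"] V1T V1N dinner_sym by metis
  then have e1: "a * a * (- 1 + c * c) = 1"
    using Bt(5) by (simp add: algebra_simps)
  have e2: "a * x - a * c * y = 0" using Bt(9) V1V3 by simp
  have D2: "ddet (T t) (N t) (B t) * ddet (T t) (N t) (B t) = 1"
    unfolding ddet_gram using A TN by simp
  have g: "ddet (V1 t) (B t) (V3 t) * ddet (T t) (N t) (B t) = - (a * y - a * c * x)"
    unfolding ddet_gram using V1T V1N V1B TN A(7) V3B x_def y_def
    by (simp add: algebra_simps)
  have e3: "a * y - a * c * x = -1"
    using g D2 orient t V2B by (metis minus_equation_iff)
  have "a * (a * y - a * c * x) = a * a * y * (1 - c * c) - a * c * (a * x - a * c * y)"
    by (simp add: algebra_simps)
  then have "a * (-1) = a * a * y * (1 - c * c) - a * c * 0" unfolding e2 e3 .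
  moreover have "a * a * y * (1 - c * c) = - y * (a * a * (- 1 + c * c))"
    by (simp add: algebra_simps)
  ultimately have ya: "y = a" using e1 by simp
  have dV1: "dinner (- ((s' * \<tau> t) *s N t)) (V1 t) = dinner (- ((s2' * P t) *s V1 t) + (s2' * Q t) *s V3 t) (V1 t)"
    using deq by simp
  then have f1: "s' * \<tau> t * (a * c) = - (s2' * P t)"
    using V1N Bt(5,9) dinner_sym[of "V3 t" "V1 t"]
    by (simp add: dinner_add_l dinner_diff_l dinner_scale_l dinner_neg_l dinner_sym[of "N t" "V1 t"])
  have dV3: "dinner (- ((s' * \<tau> t) *s N t)) (V3 t) = dinner (- ((s2' * P t) *s V1 t) + (s2' * Q t) *s V3 t) (V3 t)"
    using deq by simp
  then have f2: "- (s' * \<tau> t * a) = - (s2' * Q t)"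
    using ya Bt(7,9) unfolding y_def
    by (simp add: dinner_add_l dinner_diff_l dinner_scale_l dinner_neg_l dinner_sym[of "N t" "V3 t"])
  have "s2' * (- (c * Q t)) = - (c * (s2' * Q t))" by (simp add: ac_simps)
  also have "\<dots> = - (c * (s' * \<tau> t * a))" using f2 by simp
  also have "\<dots> = - (s' * \<tau> t * (a * c))" by (simp add: ac_simps)
  also have "\<dots> = s2' * P t" using f1 by simp
  finally have "s2' * P t = s2' * (- (c * Q t))" by simp
  then have "inverse s2' * (s2' * P t) = inverse s2' * (s2' * (- (c * Q t)))" by simp
  then have "(s2' * inverse s2') * P t = (s2' * inverse s2') * (- (c * Q t))"
    by (simp add: ac_simps)
  then have PQ: "P t = - (lam * Q t) * \<tau> t"
    using inv2 unfolding c_def by (simp add: ac_simps)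
  have r1: "dre a * dre a * (- 1 + dre c * dre c) = 1"
    using arg_cong[OF e1, of dre] by simp
  then have ra: "dre a \<noteq> 0" by (metis mult_zero_left zero_neq_one)
  have rc: "dre c \<noteq> 0"
  proof
    assume "dre c = 0"
    with r1 have "dre a * dre a = -1" by simp
    moreover have "dre a * dre a \<ge> 0" by simp
    ultimately show False by linarith
  qed
  have rt: "dre (\<tau> t) \<noteq> 0" and rl: "dre lam \<noteq> 0" using rc unfolding c_def by auto
  have "dre s' * dre (\<tau> t) * dre a = dre s2' * dre (Q t)"
    using arg_cong[OF f2, of dre] by simp
  then have rQ: "dre (Q t) \<noteq> 0" using s1pos s2pos ra rt by auto
  have inv3: "(lam * Q t) * inverse (lam * Q t) = 1"
    using rQ rl by (intro dual_inv) simp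
  have "- (P t / (lam * Q t)) = \<tau> t * ((lam * Q t) * inverse (lam * Q t))"
    unfolding PQ divide_dual_def by (simp add: ac_simps)
  then show "\<tau> t = - (P t / (lam * Q t))" using inv3 by simp
qed

end
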